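(* Consider an incoming approach (queue $i$) of a signalized intersection in the "one+two lane" model. A single shared lane of vehicles splits near the intersection into two dedicated lanes, one for straight-going and one for left-turning vehicles. The traffic light senses whether the head position of each dedicated lane is occupied, so it knows the movements of the (up to two) leading vehicles. A traffic phase $\phi$ gives a green interval of $n$ time slots, with at most one vehicle passing per slot. The possible head configurations are as follows. - Conf. I: the straight-lane head is empty and the two leading vehicles both turn left. - Conf. IV: the left-lane head is empty and the two leading vehicles both go straight. - Conf. II and Conf. III: both heads are occupied, one by a straight-going and one by a left-turning vehicle. Let $g=2$ in Conf. I or IV and $g=1$ in Conf. II or III. Assume: - the phase $\phi$ permits the movement of the $g$ guaranteed leading vehicles, so these $g$ vehicles pass; - the remaining vehicles form a sub-queue of $m=n-g$ positions that behaves as a single lane. In this single lane, vehicles pass one per slot in queue order while the head intends the permitted movement; a head vehicle intending the other movement blocks itself and all vehicles behind it. In the sub-queue, $T\le m$ vehicles are communicating, at sub-queue positions $1\le v_1<\dots<v_T\le m$, with known movements. Each non-communicating sub-queue vehicle independently intends the permitted movement with probability $p_1$ and the other movement with probability $p_2=1-p_1$, where $0<p_1<1$. Set $v_0=1$ and $v_{T+1}=m+1$. Let $K^{\phi}_i$ be the number of vehicles of queue $i$ that pass. If all communicating sub-queue vehicles intend the permitted movement (condition $C_3$), then $$E(K^{\phi}_i)=g+\sum_{l=0}^{T}\frac{p_1^{1-l}}{p_2}\Big((p_1+p_2v_l)p_1^{v_l-1}+(1-2p_1-p_2v_{l+1})p_1^{v_{l+1}-2}\Big)+(n-g)\,p_1^{\,n-g-T}.$$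 If the first communicating sub-queue vehicle not intending the permitted movement is the $L$-th one, at position $v_L$ with $1\le L\le T$ (condition $C_4$), then $$E(K^{\phi}_i)=g+\sum_{l=0}^{L-1}\frac{p_1^{1-l}}{p_2}\Big((p_1+p_2v_l)p_1^{v_l-1}+(1-2p_1-p_2v_{l+1})p_1^{v_{l+1}-2}\Big)+(v_L-1)\,p_1^{\,v_L-L}.$$ In particular, for Conf. I/IV the leading constant is $2$ with $T\le n-2$ and final $C_3$ term $(n-2)p_1^{n-2-T}$; for Conf. II/III it is $1$ with $T\le n-1$ and final $C_3$ term $(n-1)p_1^{n-1-T}$.
   Context: Right-turning vehicles are merged with straight-going ones, so only two movements exist. The expectation is over the random intentions of the non-communicating vehicles in the sub-queue, conditional on the known information. Time index $t$ is suppressed. *)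

theory Defs
  imports Complex_Main "HOL-Library.FuncSet"
begin

datatype conf = ConfI | ConfII | ConfIII | ConfIV

fun g_of :: "conf \<Rightarrow> nat" where
  "g_of ConfI = 2" | "g_of ConfIV = 2" | "g_of ConfII = 1" | "g_of ConfIII = 1"

text \<open>Single-lane sub-queue of m positions 1..m; w j = True iff the vehicle at position j
  intends the permitted movement.\<close>
definition passed :: "nat \<Rightarrow> (nat \<Rightarrow> bool) \<Rightarrow> nat" where
  "passed m w = card {k \<in> {1..m}. \<forall>j\<in>{1..k}. w j}"

definition combine :: "nat set \<Rightarrow> (nat \<Rightarrow> bool) \<Rightarrow> (nat \<Rightarrow> bool) \<Rightarrow> nat \<Rightarrow> bool" where
  "combine V kn a j = (if j \<in> V then kn j else a j)"

definition expected_K :: "nat \<Rightarrow> nat \<Rightarrow> nat set \<Rightarrow> (nat \<Rightarrow> bool) \<Rightarrow> real \<Rightarrow> real" where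
  "expected_K g m V kn p1 =
     (\<Sum>a\<in>PiE ({1..m} - V) (\<lambda>_. UNIV).
        (\<Prod>j\<in>{1..m} - V. if a j then p1 else 1 - p1) *
        real (g + passed m (combine V kn a)))"

end

theory Submission
  imports Defs
begin

lemma prob_prefix:
  fixes p :: real
  assumes "finite N" "P \<subseteq> N"
  shows "(\<Sum>a\<in>PiE N (\<lambda>_. UNIV). (\<Prod>j\<in>N. if a j then p else 1-p) * (if \<forall>j\<in>P. a j then 1 else 0)) = p ^ card P"
proof -
  define f where "f j b = (if b then p else 1-p) * (if j \<in> P \<and> \<not> b then 0 else 1)" for j b
  have 1: "(\<Prod>j\<in>N. if a j then p else 1-p) * (if \<forall>j\<in>P. a j then 1 else 0) = (\<Prod>j\<in>N. f j (a j))" for a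
  proof -
    have "(if \<forall>j\<in>P. a j then 1 else 0) = (\<Prod>j\<in>N. (if j \<in> P \<and> \<not> a j then 0 else 1::real))"
      using assms by (auto simp: prod_zero_iff intro!: prod.neutral)
    thus ?thesis by (simp add: f_def prod.distrib)
  qed
  have "(\<Sum>a\<in>PiE N (\<lambda>_. UNIV). (\<Prod>j\<in>N. if a j then p else 1-p) * (if \<forall>j\<in>P. a j then 1 else 0))
      = (\<Sum>a\<in>PiE N (\<lambda>_. UNIV). \<Prod>j\<in>N. f j (a j))" by (simp add: 1)
  also have "\<dots> = (\<Prod>j\<in>N. \<Sum>b\<in>UNIV. f j b)"
    by (rule prod_sum_PiE[symmetric]) (use assms in auto)
  also have "\<dots> = (\<Prod>j\<in>N. if j \<in> P then p else 1)"
    by (rule prod.cong) (auto simp: f_def UNIV_bool)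
  also have "\<dots> = p ^ card P"
    using assms by (simp add: prod.If_cases Int_absorb1)
  finally show ?thesis .
qed

lemma passed_sum: "real (passed m w) = (\<Sum>k\<in>{1..m}. if (\<forall>j\<in>{1..k}. w j) then 1 else 0)"
proof -
  have "{k \<in> {1..m}. \<forall>j\<in>{1..k}. w j} = {1..m} \<inter> {k. \<forall>j\<in>{1..k}. w j}" by auto
  then show ?thesis unfolding passed_def by (simp add: sum.If_cases)
qed

lemma expK:
  fixes p :: real
  shows "expected_K g m V kn p = real g + (\<Sum>k\<in>{1..m}. if (\<forall>j\<in>V \<inter> {1..k}. kn j) then p ^ card (({1..m} - V) \<inter> {1..k}) else 0)"
proof -
  let ?N = "{1..m} - V"
  let ?w = "\<lambda>a. (\<Prod>j\<in>?N. if a j then p else 1-p)"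
  let ?A = "PiE ?N (\<lambda>_. UNIV)"
  have tot: "(\<Sum>a\<in>?A. ?w a) = 1"
    using prob_prefix[of ?N "{}" p] by simp
  have ind: "(\<forall>j\<in>{1..k}. combine V kn a j) = ((\<forall>j\<in>V \<inter> {1..k}. kn j) \<and> (\<forall>j\<in>?N \<inter> {1..k}. a j))"
    if "k \<in> {1..m}" for k a using that by (auto simp: combine_def)
  have "expected_K g m V kn p = (\<Sum>a\<in>?A. ?w a * real g) + (\<Sum>a\<in>?A. ?w a * real (passed m (combine V kn a)))"
    unfolding expected_K_def by (simp add: sum.distrib[symmetric] algebra_simps)
  also have "(\<Sum>a\<in>?A. ?w a * real g) = real g" using tot by (simp add: sum_distrib_right[symmetric])
  also have "(\<Sum>a\<in>?A. ?w a * real (passed m (combine V kn a)))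
     = (\<Sum>a\<in>?A. \<Sum>k\<in>{1..m}. ?w a * (if (\<forall>j\<in>{1..k}. combine V kn a j) then 1 else 0))"
    by (simp add: passed_sum sum_distrib_left)
  also have "\<dots> = (\<Sum>k\<in>{1..m}. \<Sum>a\<in>?A. ?w a * (if (\<forall>j\<in>{1..k}. combine V kn a j) then 1 else 0))"
    by (rule sum.swap)
  also have "\<dots> = (\<Sum>k\<in>{1..m}. if (\<forall>j\<in>V \<inter> {1..k}. kn j) then p ^ card (?N \<inter> {1..k}) else 0)"
  proof (rule sum.cong[OF refl])
    fix k assume k: "k \<in> {1..m}"
    show "(\<Sum>a\<in>?A. ?w a * (if (\<forall>j\<in>{1..k}. combine V kn a j) then 1 else 0)) = (if (\<forall>j\<in>V \<inter> {1..k}. kn j) then p ^ card (?N \<inter> {1..k}) else 0)"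
    proof -
      have "(\<Sum>a\<in>?A. ?w a * (if (\<forall>j\<in>{1..k}. combine V kn a j) then 1 else 0))
        = (\<Sum>a\<in>?A. (if (\<forall>j\<in>V \<inter> {1..k}. kn j) then 1 else 0) * (?w a * (if (\<forall>j\<in>?N \<inter> {1..k}. a j) then 1 else 0)))"
      proof (rule sum.cong[OF refl])
        fix a
        have h: "(if (\<forall>j\<in>{1..k}. combine V kn a j) then 1 else 0::real) = (if (\<forall>j\<in>V \<inter> {1..k}. kn j) then 1 else 0) * (if (\<forall>j\<in>?N \<inter> {1..k}. a j) then 1 else 0)"
          by (subst ind[OF k]) simp
        show "?w a * (if (\<forall>j\<in>{1..k}. combine V kn a j) then 1 else 0) = (if (\<forall>j\<in>V \<inter> {1..k}. kn j) then 1 else 0) * (?w a * (if (\<forall>j\<in>?N \<inter> {1..k}. a j) then 1 else 0))"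
          by (simp only: h mult_ac)
      qed
      also have "\<dots> = (if (\<forall>j\<in>V \<inter> {1..k}. kn j) then 1 else 0) * p ^ card (?N \<inter> {1..k})"
        by (simp add: sum_distrib_left[symmetric] prob_prefix)
      finally show ?thesis by simp
    qed
  qed
  finally show ?thesis by simp
qed

lemma geom:
  fixes p :: real
  assumes "p \<noteq> 0" "a \<le> b"
  shows "(\<Sum>k\<in>{a..<b}. p powi (int k - int l)) * (1-p) = p powi (int a - int l) - p powi (int b - int l)"
  using assms(2)
proof (induction b rule: dec_induct)
  case base then show ?case by simp
next
  case (step b)
  have ee: "int (Suc b) - int l = (int b - int l) + 1" by simp
  have e: "p powi (int (Suc b) - int l) = p powi (int b - int l) * p"
    by (subst ee, subst power_int_add) (use assms(1) in auto)
  have s: "(\<Sum>k\<in>{a..<Suc b}. p powi (int k - int l)) = (\<Sum>k\<in>{a..<b}. p powi (int k - int l)) + p powi (int b - int l)"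
    using step(1) by simp
  have "((\<Sum>k\<in>{a..<b}. p powi (int k - int l)) + p powi (int b - int l)) * (1-p)
     = (\<Sum>k\<in>{a..<b}. p powi (int k - int l)) * (1-p) + p powi (int b - int l) * (1-p)"
    by (rule distrib_right)
  also have "\<dots> = p powi (int a - int l) - p powi (int b - int l) * p"
    unfolding step.IH by (simp add: algebra_simps)
  finally show ?case unfolding s e .
qed

lemma seg:
  fixes p :: real
  assumes "0 < p" "p < 1" "1 \<le> a" "a \<le> b"
  shows "p powi (1 - int l) / (1-p) * ((p + (1-p) * real a) * p powi (int a - 1)
                + (1 - 2 * p - (1-p) * real b) * p powi (int b - 2))
   = (\<Sum>k\<in>{a..<b}. p powi (int k - int l)) + (real a - 1) * p powi (int a - int l)
       - (real b - 1) * p powi (int b - int (l+1))"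
proof -
  have p0: "p \<noteq> 0" and q0: "1 - p \<noteq> 0" using assms by auto
  define Y where "Y = p powi (int a - int l)"
  define X where "X = p powi (int b - int (l+1))"
  have e1: "p powi (1 - int l) * p powi (int a - 1) = Y"
    unfolding Y_def using p0 by (simp add: power_int_add[symmetric])
  have "p powi ((1 - int l) + (int b - 2)) = p powi (1 - int l) * p powi (int b - 2)"
    by (rule power_int_add) (use p0 in auto)
  moreover have "(1 - int l) + (int b - 2) = int b - int (l+1)" by simp
  ultimately have e2: "p powi (1 - int l) * p powi (int b - 2) = X"
    unfolding X_def by simp
  have "p powi (1 + (int b - int (l+1))) = p powi 1 * p powi (int b - int (l+1))"
    by (rule power_int_add) (use p0 in auto)
  moreover have "1 + (int b - int (l+1)) = int b - int l" by simp
  ultimately have e3: "p powi (int b - int l) = p * X"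
    unfolding X_def by simp
  have G: "(\<Sum>k\<in>{a..<b}. p powi (int k - int l)) = (Y - p * X) / (1 - p)"
    using geom[OF p0 assms(4), of l] q0 unfolding Y_def[symmetric] e3 by (simp add: field_simps)
  have pp: "p powi (1 - int l) * ((p + (1-p) * real a) * p powi (int a - 1)
                + (1 - 2 * p - (1-p) * real b) * p powi (int b - 2))
     = (p + (1-p) * real a) * Y + (1 - 2 * p - (1-p) * real b) * X"
    unfolding e1[symmetric] e2[symmetric] by (simp add: algebra_simps)
  have "p powi (1 - int l) / (1-p) * ((p + (1-p) * real a) * p powi (int a - 1)
                + (1 - 2 * p - (1-p) * real b) * p powi (int b - 2))
     = ((p + (1-p) * real a) * Y + (1 - 2 * p - (1-p) * real b) * X) / (1-p)"
    by (simp flip: pp)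
  also have "\<dots> = (Y - p*X)/(1-p) + (real a - 1) * Y - (real b - 1) * X"
    using q0 by (simp add: field_simps)
  finally show ?thesis using G by (simp add: Y_def X_def)
qed

lemma decomp:
  fixes v :: "nat \<Rightarrow> nat"
  assumes "\<forall>l<t. v l \<le> v (Suc l)"
  shows "v 0 \<le> v t \<and> (\<Sum>k\<in>{v 0..<v t}. f k) = (\<Sum>l<t. \<Sum>k\<in>{v l..<v (Suc l)}. f k::real)"
  using assms
proof (induction t)
  case 0 then show ?case by simp
next
  case (Suc t)
  then have IH: "v 0 \<le> v t" "(\<Sum>k\<in>{v 0..<v t}. f k) = (\<Sum>l<t. \<Sum>k\<in>{v l..<v (Suc l)}. f k)"
    and st: "v t \<le> v (Suc t)" by auto
  show ?case using IH st sum.atLeastLessThan_concat[OF IH(1) st, of f, symmetric] by simp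
qed

theorem theorem2:
  fixes c :: conf and n T :: nat and v :: "nat \<Rightarrow> nat" and kn :: "nat \<Rightarrow> bool"
    and p1 p2 :: real
  assumes hg: "g_of c \<le> n"
    and hT: "T \<le> n - g_of c"
    and hv_mono: "strict_mono_on {1..T} v"
    and hv_range: "\<forall>l\<in>{1..T}. 1 \<le> v l \<and> v l \<le> n - g_of c"
    and hv0: "v 0 = 1"
    and hvT: "v (T + 1) = n - g_of c + 1"
    and hp1: "0 < p1" "p1 < 1"
    and hp2: "p2 = 1 - p1"
  shows
    "((\<forall>l\<in>{1..T}. kn (v l)) \<longrightarrow>
        expected_K (g_of c) (n - g_of c) (v ` {1..T}) kn p1 =
          real (g_of c)
          + (\<Sum>l = 0..T. p1 powi (1 - int l) / p2 *
               ((p1 + p2 * real (v l)) * p1 powi (int (v l) - 1)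
                + (1 - 2 * p1 - p2 * real (v (l + 1))) * p1 powi (int (v (l + 1)) - 2)))
          + real (n - g_of c) * p1 powi (int (n - g_of c) - int T))
     \<and>
     (\<forall>L\<in>{1..T}. (\<not> kn (v L) \<and> (\<forall>l\<in>{1..<L}. kn (v l))) \<longrightarrow>
        expected_K (g_of c) (n - g_of c) (v ` {1..T}) kn p1 =
          real (g_of c)
          + (\<Sum>l = 0..L - 1. p1 powi (1 - int l) / p2 *
               ((p1 + p2 * real (v l)) * p1 powi (int (v l) - 1)
                + (1 - 2 * p1 - p2 * real (v (l + 1))) * p1 powi (int (v (l + 1)) - 2)))
          + (real (v L) - 1) * p1 powi (int (v L) - int L))"
proof -
  define g where "g = g_of c"
  define m where "m = n - g"
  define V where "V = v ` {1..T}"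
  define N where "N = {1..m} - V"
  define cc where "cc k = (if (\<forall>j\<in>V \<inter> {1..k}. kn j) then p1 ^ card (N \<inter> {1..k}) else 0)" for k
  have EK: "expected_K g m V kn p1 = real g + (\<Sum>k\<in>{1..m}. cc k)"
    unfolding cc_def N_def by (rule expK)
  have hvT': "v (T+1) = m + 1" using hvT by (simp add: m_def g_def)
  have rng: "1 \<le> v l \<and> v l \<le> m" if "l \<in> {1..T}" for l
    using hv_range that by (simp add: m_def g_def)
  have strict: "v i < v j" if "1 \<le> i" "i < j" "j \<le> T+1" for i j
  proof (cases "j = T+1")
    case True then show ?thesis using rng[of i] that hvT' by auto
  next
    case False then show ?thesis using that hv_mono unfolding strict_mono_on_def by auto
  qed
  have mono: "v i \<le> v j" if "i \<le> j" "j \<le> T+1" for i j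
  proof (cases "i = 0")
    case True
    then show ?thesis using hv0 rng[of j] hvT' that by (cases "j = T+1"; cases "j = 0") auto
  next
    case False
    then show ?thesis using strict[of i j] that by (cases "i = j") auto
  qed
  have vge1: "1 \<le> v l" if "l \<le> T" for l
    using rng[of l] hv0 that by (cases "l = 0") auto
  have segc: "V \<inter> {1..k} = v ` {1..l} \<and> card (N \<inter> {1..k}) = k - l \<and> l \<le> k"
    if l: "l \<le> T" "v l \<le> k" "k < v (Suc l)" for l k
  proof -
    have km: "k \<le> m" using mono[of "Suc l" "T+1"] l hvT' by auto
    have A: "V \<inter> {1..k} = v ` {1..l}"
    proof
      show "V \<inter> {1..k} \<subseteq> v ` {1..l}"
      proof
        fix x assume x: "x \<in> V \<inter> {1..k}"
        then obtain j where j: "j \<in> {1..T}" "x = v j" unfolding V_def by auto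
        have "j \<le> l"
        proof (rule ccontr)
          assume "\<not> j \<le> l"
          then have "v (Suc l) \<le> v j" using mono[of "Suc l" j] j by auto
          then show False using x j l by auto
        qed
        then show "x \<in> v ` {1..l}" using j by auto
      qed
      show "v ` {1..l} \<subseteq> V \<inter> {1..k}"
      proof
        fix x assume "x \<in> v ` {1..l}"
        then obtain j where j: "j \<in> {1..l}" "x = v j" by auto
        have "v j \<le> v l" using mono[of j l] j l by auto
        then show "x \<in> V \<inter> {1..k}" using j l rng[of j] unfolding V_def by auto
      qed
    qed
    have inj: "inj_on v {1..l}"
      using strict_mono_on_imp_inj_on[OF hv_mono] l by (auto intro: inj_on_subset)
    have cV: "card (v ` {1..l}) = l" using card_image[OF inj] by simp
    have sub: "v ` {1..l} \<subseteq> {1..k}" using A by auto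
    have Nk: "N \<inter> {1..k} = {1..k} - v ` {1..l}"
      using A km unfolding N_def by auto
    have "card (N \<inter> {1..k}) = k - l" unfolding Nk
      by (subst card_Diff_subset) (use sub cV in auto)
    moreover have "l \<le> k" using card_mono[OF _ sub] cV by simp
    ultimately show ?thesis using A by simp
  qed
  define R where "R l = (real (v l) - 1) * p1 powi (int (v l) - int l)" for l
  define S where "S l = p1 powi (1 - int l) / p2 *
               ((p1 + p2 * real (v l)) * p1 powi (int (v l) - 1)
                + (1 - 2 * p1 - p2 * real (v (l + 1))) * p1 powi (int (v (l + 1)) - 2))" for l
  have main: "(\<Sum>k\<in>{v 0..<v t}. cc k) = (\<Sum>l<t. S l) + R t"
    if t: "t \<le> T + 1" and good: "\<And>l k. l < t \<Longrightarrow> v l \<le> k \<Longrightarrow> k < v (Suc l) \<Longrightarrow> (\<forall>j\<in>{1..l}. kn (v j))" for t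
  proof -
    have chain: "\<forall>l<t. v l \<le> v (Suc l)" using mono t by auto
    have "(\<Sum>k\<in>{v 0..<v t}. cc k) = (\<Sum>l<t. \<Sum>k\<in>{v l..<v (Suc l)}. cc k)"
      using decomp[OF chain] by simp
    also have "\<dots> = (\<Sum>l<t. \<Sum>k\<in>{v l..<v (Suc l)}. p1 powi (int k - int l))"
    proof (intro sum.cong refl)
      fix l k assume l: "l \<in> {..<t}" and k: "k \<in> {v l..<v (Suc l)}"
      have sc: "V \<inter> {1..k} = v ` {1..l} \<and> card (N \<inter> {1..k}) = k - l \<and> l \<le> k"
        using segc[of l k] l k t by auto
      have "\<forall>j\<in>V \<inter> {1..k}. kn j" using sc good[of l k] l k by auto
      then have "cc k = p1 ^ (k - l)" using sc unfolding cc_def by simp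
      also have "\<dots> = p1 powi (int k - int l)"
        using sc by (simp add: power_int_def nat_diff_distrib)
      finally show "cc k = p1 powi (int k - int l)" .
    qed
    also have "\<dots> = (\<Sum>l<t. S l - R l + R (Suc l))"
    proof (intro sum.cong refl)
      fix l assume l: "l \<in> {..<t}"
      have "S l = (\<Sum>k\<in>{v l..<v (Suc l)}. p1 powi (int k - int l)) + R l - R (Suc l)"
        unfolding S_def R_def hp2 using seg[OF hp1 vge1[of l] mono[of l "Suc l"], of l] l t by simp
      then show "(\<Sum>k\<in>{v l..<v (Suc l)}. p1 powi (int k - int l)) = S l - R l + R (Suc l)" by simp
    qed
    also have "\<dots> = (\<Sum>l<t. S l) + ((\<Sum>l<t. R (Suc l) - R l))"
      by (simp add: sum.distrib[symmetric] algebra_simps)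
    also have "(\<Sum>l<t. R (Suc l) - R l) = R t - R 0" by (rule sum_lessThan_telescope)
    also have "R 0 = 0" unfolding R_def using hv0 by simp
    finally show ?thesis by simp
  qed
  show ?thesis
  proof (intro conjI impI ballI)
    assume all: "\<forall>l\<in>{1..T}. kn (v l)"
    have "(\<Sum>k\<in>{1..m}. cc k) = (\<Sum>k\<in>{v 0..<v (T+1)}. cc k)"
      using hv0 hvT' by (simp add: atLeastLessThanSuc_atLeastAtMost)
    also have "\<dots> = (\<Sum>l<T+1. S l) + R (T+1)"
      by (rule main) (use all in auto)
    also have "(\<Sum>l<T+1. S l) = (\<Sum>l=0..T. S l)"
      by (simp add: atLeast0AtMost lessThan_Suc_atMost)
    also have "R (T+1) = real m * p1 powi (int m - int T)"
      unfolding R_def hvT' by simp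
    finally show "expected_K (g_of c) (n - g_of c) (v ` {1..T}) kn p1 =
          real (g_of c)
          + (\<Sum>l = 0..T. p1 powi (1 - int l) / p2 *
               ((p1 + p2 * real (v l)) * p1 powi (int (v l) - 1)
                + (1 - 2 * p1 - p2 * real (v (l + 1))) * p1 powi (int (v (l + 1)) - 2)))
          + real (n - g_of c) * p1 powi (int (n - g_of c) - int T)"
      using EK unfolding S_def g_def m_def V_def by simp
  next
    fix L assume L: "L \<in> {1..T}" and cL: "\<not> kn (v L) \<and> (\<forall>l\<in>{1..<L}. kn (v l))"
    have vLm: "v L \<le> m" using rng L by auto
    have "(\<Sum>k\<in>{1..m}. cc k) = (\<Sum>k\<in>{1..<v L}. cc k) + (\<Sum>k\<in>{v L..<m+1}. cc k)"
      using sum.atLeastLessThan_concat[of 1 "v L" "m+1" cc] vLm rng[OF L]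
      by (simp add: atLeastLessThanSuc_atLeastAtMost)
    also have "(\<Sum>k\<in>{v L..<m+1}. cc k) = 0"
    proof (rule sum.neutral, rule ballI)
      fix k assume k: "k \<in> {v L..<m+1}"
      have "v L \<in> V \<inter> {1..k}" using k L rng[OF L] unfolding V_def by auto
      then show "cc k = 0" unfolding cc_def using cL by auto
    qed
    also have "(\<Sum>k\<in>{1..<v L}. cc k) = (\<Sum>l<L. S l) + R L"
      using hv0 main[of L] L cL by auto
    also have "(\<Sum>l<L. S l) = (\<Sum>l=0..L-1. S l)"
      using L by (cases L) (auto simp: atLeast0AtMost lessThan_Suc_atMost)
    finally show "expected_K (g_of c) (n - g_of c) (v ` {1..T}) kn p1 =
          real (g_of c)
          + (\<Sum>l = 0..L - 1. p1 powi (1 - int l) / p2 *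
               ((p1 + p2 * real (v l)) * p1 powi (int (v l) - 1)
                + (1 - 2 * p1 - p2 * real (v (l + 1))) * p1 powi (int (v (l + 1)) - 2)))
          + (real (v L) - 1) * p1 powi (int (v L) - int L)"
      using EK unfolding S_def R_def g_def m_def V_def by simp
  qed
qed

end
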